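(* Let $\alpha\in(0,\pi/4]$ and let $\mu_\alpha=\cos\alpha\,\mathcal H^1|_{T^\alpha}+\mathcal H^1|_{\Gamma_\alpha\setminus T^\alpha}$. Then $$\int\int_0^\infty\Delta^1_{\mu_\alpha}(x,r)^2\,\frac{dr}{r}\,d\mu_\alpha(x)\lesssim\sin^4\alpha,$$ with an absolute implicit constant.
   Context: $f_\alpha:\mathbb{R}\to\mathbb{R}$ is defined by $f_\alpha(x)=0$ for $x\in(-\infty,-1/2]\cup[1/2,\infty)$, $f_\alpha(x)=\tan\alpha\,(x+1/2)$ for $x\in(-1/2,0]$, and $f_\alpha(x)=-\tan\alpha\,(x-1/2)$ for $x\in(0,1/2)$. $\Gamma_\alpha\subset\mathbb{R}^2$ is the graph of $f_\alpha$, and $T^\alpha=\{(x,f_\alpha(x)):x\in[-1/2,1/2]\}$. $\mathcal H^1$ is one-dimensional Hausdorff measure. $\Delta^1_\mu(x,r)=\frac{\mu(B(x,r))}{r}-\frac{\mu(B(x,2r))}{2r}$ with $B(x,r)$ the open ball. *)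

theory Defs
  imports "HOL-Analysis.Analysis"
begin

definition f_alpha :: "real \<Rightarrow> real \<Rightarrow> real" where
  "f_alpha \<alpha> x =
     (if x \<le> -1/2 \<or> x \<ge> 1/2 then 0
      else if x \<le> 0 then tan \<alpha> * (x + 1/2)
      else - tan \<alpha> * (x - 1/2))"

definition Gamma_alpha :: "real \<Rightarrow> (real \<times> real) set" where
  "Gamma_alpha \<alpha> = {(x, f_alpha \<alpha> x) | x. True}"

definition T_alpha :: "real \<Rightarrow> (real \<times> real) set" where
  "T_alpha \<alpha> = {(x, f_alpha \<alpha> x) | x. x \<in> {-1/2..1/2}}"

definition H1_delta :: "real \<Rightarrow> (real \<times> real) set \<Rightarrow> ennreal" where
  "H1_delta \<delta> A = (INF U \<in> {U :: nat \<Rightarrow> (real \<times> real) set.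
        A \<subseteq> (\<Union>i. U i) \<and> (\<forall>i. diameter (U i) \<le> \<delta>)}.
        (\<Sum>i. ennreal (diameter (U i))))"

definition H1 :: "(real \<times> real) set \<Rightarrow> ennreal" where
  "H1 A = (SUP \<delta> \<in> {0<..}. H1_delta \<delta> A)"

definition mu_alpha :: "real \<Rightarrow> (real \<times> real) measure" where
  "mu_alpha \<alpha> = measure_of UNIV (sets borel)
     (\<lambda>A. ennreal (cos \<alpha>) * H1 (A \<inter> T_alpha \<alpha>) + H1 (A \<inter> (Gamma_alpha \<alpha> - T_alpha \<alpha>)))"

definition Delta1 :: "(real \<times> real) measure \<Rightarrow> real \<times> real \<Rightarrow> real \<Rightarrow> real" where
  "Delta1 \<mu> x r = measure \<mu> (ball x r) / r - measure \<mu> (ball x (2*r)) / (2*r)"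

end

theory Submission
  imports Defs "HOL-Real_Asymp.Real_Asymp"
begin

lemma H1_delta_le_cover:
  assumes "A \<subseteq> (\<Union>i. U i)" "\<And>i. diameter (U i) \<le> \<delta>"
  shows "H1_delta \<delta> A \<le> (\<Sum>i. ennreal (diameter (U i)))"
  unfolding H1_delta_def by (rule INF_lower) (use assms in auto)

lemma H1_le_const:
  assumes "\<And>\<delta>. \<delta> > 0 \<Longrightarrow> H1_delta \<delta> A \<le> c"
  shows "H1 A \<le> c"
  unfolding H1_def by (rule SUP_least) (use assms in auto)

lemma H1_delta_mono: "A \<subseteq> B \<Longrightarrow> H1_delta \<delta> A \<le> H1_delta \<delta> B"
  unfolding H1_delta_def by (rule INF_superset_mono) auto

lemma H1_mono: "A \<subseteq> B \<Longrightarrow> H1 A \<le> H1 B"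
  unfolding H1_def by (rule SUP_mono) (use H1_delta_mono in blast)

lemma H1_singleton: "H1 {p} = 0"
proof -
  have "H1 {p} \<le> 0"
  proof (rule H1_le_const)
    fix \<delta> :: real assume "\<delta> > 0"
    have "H1_delta \<delta> {p} \<le> (\<Sum>i. ennreal (diameter ((\<lambda>i::nat. {p}) i)))"
      by (rule H1_delta_le_cover) (use \<open>\<delta>>0\<close> in auto)
    then show "H1_delta \<delta> {p} \<le> 0" by simp
  qed
  then show ?thesis by simp
qed

lemma H1_empty: "H1 {} = 0"
  using H1_mono[of "{}" "{undefined}"] H1_singleton by simp

lemma H1_subset_singleton: "A \<subseteq> {p} \<Longrightarrow> H1 A = 0"
  using H1_mono[of A "{p}"] H1_singleton by simp

lemma diameter_isometry:
  assumes "\<And>x y. dist (f x) (f y) = dist x y"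
  shows "diameter (f ` U) = diameter U"
proof -
  have "(\<lambda>(x,y). dist x y) ` (f ` U \<times> f ` U) = (\<lambda>(x,y). dist x y) ` (U \<times> U)"
    using assms by (auto simp: image_iff) (metis case_prod_conv mem_Sigma_iff)+
  then show ?thesis unfolding diameter_def by (simp add: image_image)
qed

lemma H1_isometry_le:
  fixes f :: "real \<times> real \<Rightarrow> real \<times> real"
  assumes "\<And>x y. dist (f x) (f y) = dist x y"
  shows "H1 (f ` A) \<le> H1 A"
proof -
  have "H1_delta \<delta> (f ` A) \<le> H1_delta \<delta> A" for \<delta>
    unfolding H1_delta_def[of _ A]
  proof (rule INF_greatest)
    fix U :: "nat \<Rightarrow> (real \<times> real) set" assume "U \<in> {U. A \<subseteq> (\<Union>i. U i) \<and> (\<forall>i. diameter (U i) \<le> \<delta>)}"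
    then have U: "A \<subseteq> (\<Union>i. U i)" "\<And>i. diameter (U i) \<le> \<delta>" by auto
    have "H1_delta \<delta> (f ` A) \<le> (\<Sum>i. ennreal (diameter ((\<lambda>i. f ` U i) i)))"
      proof (rule H1_delta_le_cover)
      show "f ` A \<subseteq> (\<Union>i. f ` U i)" using image_mono[OF U(1), of f] by (simp add: image_UN)
      show "diameter (f ` U i) \<le> \<delta>" for i using U(2)[of i] diameter_isometry[OF assms] by simp
    qed
    then show "H1_delta \<delta> (f ` A) \<le> (\<Sum>i. ennreal (diameter (U i)))"
      using diameter_isometry[OF assms] by simp
  qed
  then show ?thesis unfolding H1_def by (rule SUP_mono') 
qed

lemma H1_isometry_eq:
  fixes f g :: "real \<times> real \<Rightarrow> real \<times> real"
  assumes "\<And>x y. dist (f x) (f y) = dist x y" "\<And>x y. dist (g x) (g y) = dist x y"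
    "\<And>x. g (f x) = x"
  shows "H1 (f ` A) = H1 A"
proof (rule antisym)
  show "H1 (f ` A) \<le> H1 A" by (rule H1_isometry_le[OF assms(1)])
  have "g ` (f ` A) = A" using assms(3) by (simp add: image_image)
  then show "H1 A \<le> H1 (f ` A)" using H1_isometry_le[OF assms(2), of "f ` A"] by simp
qed

definition seg :: "real \<Rightarrow> real \<Rightarrow> (real \<times> real) set" where
  "seg a b = {p. snd p = 0 \<and> a < fst p \<and> fst p < b}"

lemma norm_diff_horiz: "snd x = 0 \<Longrightarrow> snd y = 0 \<Longrightarrow> norm (x - y) = \<bar>fst x - fst y\<bar>"
  by (cases x; cases y) (simp add: norm_Pair)

lemma H1_seg_le:
  assumes "a < b"
  shows "H1 (seg a b) \<le> ennreal (b - a)"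
proof (rule H1_le_const)
  fix \<delta> :: real assume "\<delta> > 0"
  obtain n :: nat where n: "(b - a) / \<delta> < n" using reals_Archimedean2 by blast
  have npos: "n > 0" using n assms \<open>\<delta>>0\<close>
    by (metis divide_pos_pos diff_gt_0_iff_gt gr0I of_nat_0 order_less_asym)
  define d where "d = (b - a) / n"
  have dpos: "d > 0" using npos assms by (simp add: d_def)
  have dle: "d \<le> \<delta>" using n \<open>\<delta>>0\<close> npos unfolding d_def
    by (simp add: divide_le_eq pos_divide_less_eq mult.commute)
  define U where "U i = (if i < n then {p :: real \<times> real. snd p = 0 \<and> a + real i * d \<le> fst p \<and> fst p \<le> a + (real i + 1) * d} else {})" for i
  have diam: "diameter (U i) \<le> d" for i
  proof (rule diameter_le)
    show "U i \<noteq> {} \<or> 0 \<le> d" using dpos by simp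
    fix x y assume "x \<in> U i" "y \<in> U i"
    then show "norm (x - y) \<le> d"
      by (auto simp: U_def norm_diff_horiz algebra_simps split: if_splits)
  qed
  have cover: "seg a b \<subseteq> (\<Union>i. U i)"
  proof
    fix p assume p: "p \<in> seg a b"
    define i where "i = nat \<lfloor>(fst p - a) / d\<rfloor>"
    have q0: "0 \<le> (fst p - a) / d" using p dpos by (simp add: seg_def)
    have fl: "real i \<le> (fst p - a) / d" "(fst p - a) / d < real i + 1"
      using q0 unfolding i_def by linarith+
    have "(fst p - a) / d < n" using p dpos npos unfolding seg_def d_def by (simp add: field_simps)
    then have "i < n" using fl unfolding i_def by linarith
    moreover have "a + real i * d \<le> fst p" "fst p \<le> a + (real i + 1) * d"
      using fl dpos by (simp_all add: field_simps)
    ultimately have "p \<in> U i" using p by (simp add: U_def seg_def)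
    then show "p \<in> (\<Union>i. U i)" by blast
  qed
  have "H1_delta \<delta> (seg a b) \<le> (\<Sum>i. ennreal (diameter (U i)))"
    by (rule H1_delta_le_cover[OF cover]) (use diam dle in \<open>meson order_trans\<close>)
  also have "\<dots> = (\<Sum>i<n. ennreal (diameter (U i)))"
    by (rule suminf_finite) (auto simp: U_def)
  also have "\<dots> \<le> (\<Sum>i<n. ennreal d)"
    by (rule sum_mono) (use diam in \<open>simp add: ennreal_leI\<close>)
  also have "\<dots> = ennreal (real n * d)"
    by (simp add: ennreal_of_nat_eq_real_of_nat ennreal_mult'' dpos less_imp_le)
  also have "\<dots> = ennreal (b - a)" using npos by (simp add: d_def)
  finally show "H1_delta \<delta> (seg a b) \<le> ennreal (b - a)" .
qed

lemma additive_linear: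
  fixes g :: "real \<Rightarrow> real"
  assumes nonneg: "\<And>x. x > 0 \<Longrightarrow> g x \<ge> 0"
    and add: "\<And>x y. x > 0 \<Longrightarrow> y > 0 \<Longrightarrow> g (x + y) = g x + g y"
  shows "\<And>x. x > 0 \<Longrightarrow> g x = g 1 * x"
proof -
  define k where "k = g 1"
  have mono: "g x \<le> g y" if "0 < x" "x \<le> y" for x y
  proof (cases "x = y")
    case False
    then have "g y = g x + g (y - x)" using add[of x "y - x"] that by simp
    then show ?thesis using nonneg[of "y - x"] that False by simp
  qed simp
  have mult: "g (real n * x) = real n * g x" if "n \<ge> 1" "x > 0" for n x
    using that(1)
  proof (induction n rule: dec_induct)
    case base then show ?case by simp
  next
    case (step n)
    have "g (real (Suc n) * x) = g (real n * x + x)" by (simp add: algebra_simps)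
    also have "\<dots> = g (real n * x) + g x" using add[of "real n * x" x] step that by simp
    finally show ?case using step by (simp add: algebra_simps)
  qed
  have inv: "g (1 / real n) = k / real n" if "n \<ge> 1" for n
  proof -
    have "k = g (real n * (1 / real n))" using that by (simp add: k_def)
    also have "\<dots> = real n * g (1 / real n)" using mult[OF that, of "1 / real n"] that by simp
    finally show ?thesis using that by (simp add: field_simps)
  qed
  have frac: "g (real m / real n) = real m * k / real n" if "n \<ge> 1" "m \<ge> 1" for m n
  proof -
    have "g (real m / real n) = g (real m * (1 / real n))" by simp
    also have "\<dots> = real m * g (1 / real n)" using mult[OF that(2), of "1 / real n"] that by simp
    finally show ?thesis using inv[OF that(1)] by simp
  qed
  have k0: "k \<ge> 0" using nonneg[of 1] by (simp add: k_def)
  fix x :: real assume x: "x > 0"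
  have bound: "\<bar>g x - k * x\<bar> \<le> k / real n" if n: "n \<ge> 1" for n :: nat
  proof -
    define m where "m = nat \<lfloor>real n * x\<rfloor>"
    have npos: "real n > 0" using n by simp
    have m1: "real m \<le> real n * x" "real n * x < real m + 1"
      using x npos unfolding m_def by (simp_all add: mult_nonneg_nonneg)
    have up: "x < real (m + 1) / real n" using m1 npos by (simp add: field_simps)
    have "g x \<le> g (real (m + 1) / real n)" using mono[of x] up x by simp
    also have "\<dots> = real (m + 1) * k / real n" using frac[OF n, of "m+1"] by simp
    finally have ub: "g x \<le> real (m + 1) * k / real n" .
    have lb: "real m * k / real n \<le> g x"
    proof (cases "m \<ge> 1")
      case True
      have "real m * k / real n = g (real m / real n)" using frac[OF n True] by simp
      also have "\<dots> \<le> g x" using mono[of "real m / real n" x] True m1 npos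
        by (simp add: field_simps)
      finally show ?thesis .
    next
      case False then have "m = 0" by simp
      then show ?thesis using nonneg[OF x] by simp
    qed
    have a1: "real m * k \<le> (real n * x) * k" using m1(1) k0 by (rule mult_right_mono)
    have a2: "(real n * x) * k \<le> (real m + 1) * k" using m1(2) k0 by (intro mult_right_mono) simp_all
    have b1: "real m * k / real n \<le> k * x"
      using divide_right_mono[OF a1, of "real n"] npos by (simp add: mult.commute)
    have b2: "k * x \<le> (real m + 1) * k / real n"
      using divide_right_mono[OF a2, of "real n"] npos by (simp add: mult.commute)
    have e1: "real (m + 1) * k / real n = real m * k / real n + k / real n"
      by (simp add: add_divide_distrib distrib_right)
    have "real (m + 1) * k / real n \<le> k * x + k / real n" using e1 b1 by simp
    moreover have "k * x - k / real n \<le> real m * k / real n" using b2 e1 by (simp add: add.commute)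
    ultimately show ?thesis using ub lb by (simp add: abs_le_iff)
  qed
  show "g x = g 1 * x"
  proof (rule ccontr)
    assume ne: "g x \<noteq> g 1 * x"
    define e where "e = \<bar>g x - k * x\<bar>"
    have e: "e > 0" using ne by (simp add: e_def k_def)
    obtain n :: nat where n: "k / e < n" using reals_Archimedean2 by blast
    have "n \<ge> 1" using n e k0 by (metis divide_nonneg_pos less_one not_le of_nat_0 of_nat_le_0_iff order_le_less_trans le_less_linear)
    then have "e \<le> k / real n" using bound unfolding e_def by blast
    then have "e * real n \<le> k" using \<open>n \<ge> 1\<close> by (simp add: field_simps)
    moreover have "k < e * real n" using n e by (simp add: field_simps)
    ultimately show False by simp
  qed
qed

lemma dist_translate: "dist (p + v) (q + v) = dist p (q :: real \<times> real)"
  by (simp add: dist_norm)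

lemma H1_translate: "H1 ((\<lambda>p. p + v) ` A) = H1 A"
  by (rule H1_isometry_eq[where g = "\<lambda>p. p - v"]) (auto simp: dist_norm)

definition rot :: "real \<Rightarrow> real \<times> real \<Rightarrow> real \<times> real" where
  "rot \<beta> p = (fst p * cos \<beta> - snd p * sin \<beta>, fst p * sin \<beta> + snd p * cos \<beta>)"

lemma rot_sq: "(x * c - y * s)\<^sup>2 + (x * s + y * c)\<^sup>2 = (x\<^sup>2 + y\<^sup>2) * (s\<^sup>2 + c\<^sup>2)" for x y s c :: real
  by (simp add: power2_eq_square algebra_simps)

lemma dist_rot: "dist (rot \<beta> p) (rot \<beta> q) = dist p q"
proof -
  obtain a b where p: "p = (a, b)" by (cases p)
  obtain a' b' where q: "q = (a', b')" by (cases q)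
  have e1: "a * cos \<beta> - b * sin \<beta> - (a' * cos \<beta> - b' * sin \<beta>) = (a - a') * cos \<beta> - (b - b') * sin \<beta>"
    "a * sin \<beta> + b * cos \<beta> - (a' * sin \<beta> + b' * cos \<beta>) = (a - a') * sin \<beta> + (b - b') * cos \<beta>"
    by (simp_all add: algebra_simps)
  show ?thesis
    unfolding p q rot_def dist_Pair_Pair dist_real_def
    by (simp only: fst_conv snd_conv power2_abs e1 rot_sq sin_cos_squared_add mult_1_right)
qed

lemma rot_inv: "rot (- \<beta>) (rot \<beta> p) = p"
proof -
  obtain a b where p: "p = (a, b)" by (cases p)
  have s: "cos \<beta> * cos \<beta> + sin \<beta> * sin \<beta> = 1" using sin_cos_squared_add[of \<beta>] by (simp add: power2_eq_square)
  have "a * (cos \<beta> * cos \<beta>) + a * (sin \<beta> * sin \<beta>) = a" "b * (cos \<beta> * cos \<beta>) + b * (sin \<beta> * sin \<beta>) = b"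
    using s by (metis distrib_left mult_1_right)+
  then show ?thesis unfolding p rot_def by (simp add: algebra_simps)
qed

lemma H1_rot: "H1 (rot \<beta> ` A) = H1 A"
  by (rule H1_isometry_eq[where g = "rot (- \<beta>)"]) (auto simp: dist_rot rot_inv)

lemma seg_translate: "(\<lambda>p. p + (c, 0)) ` seg a b = seg (a + c) (b + c)"
proof -
  have "p \<in> (\<lambda>p. p + (c, 0)) ` seg a b" if "p \<in> seg (a + c) (b + c)" for p
    using that by (intro image_eqI[where x = "p - (c,0)"]) (auto simp: seg_def)
  then show ?thesis by (auto simp: seg_def)
qed

lemma H1_seg_shift: "H1 (seg a b) = H1 (seg 0 (b - a))"
  using H1_translate[of "(-a, 0)" "seg a b"] seg_translate[of "-a" a b] by simp

lemma f_alpha_eq: "f_alpha \<alpha> t = tan \<alpha> * max 0 (1/2 - \<bar>t\<bar>)"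
  unfolding f_alpha_def by (auto simp: max_def algebra_simps)

lemma Gamma_eq: "Gamma_alpha \<alpha> = {p. snd p = f_alpha \<alpha> (fst p)}"
  unfolding Gamma_alpha_def by auto

lemma T_eq: "T_alpha \<alpha> = {p. snd p = f_alpha \<alpha> (fst p) \<and> -1/2 \<le> fst p \<and> fst p \<le> 1/2}"
  unfolding T_alpha_def by auto

lemma cont_f: "continuous_on UNIV (f_alpha \<alpha>)"
  unfolding f_alpha_eq[abs_def] by (intro continuous_intros)

lemma f_meas[measurable]: "f_alpha \<alpha> \<in> borel_measurable borel"
  using cont_f borel_measurable_continuous_onI by blast

lemma Gamma_closed: "closed (Gamma_alpha \<alpha>)"
  unfolding Gamma_eq
  by (rule closed_Collect_eq) (intro continuous_intros continuous_on_compose2[OF cont_f] | simp)+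

lemma Gamma_borel[measurable]: "Gamma_alpha \<alpha> \<in> sets borel"
  using Gamma_closed by measurable

lemma T_eq2: "T_alpha \<alpha> = Gamma_alpha \<alpha> \<inter> {p. -1/2 \<le> fst p} \<inter> {p. fst p \<le> 1/2}"
  unfolding T_eq Gamma_eq by auto

lemma T_closed: "closed (T_alpha \<alpha>)"
  unfolding T_eq2
  by (intro closed_Int Gamma_closed closed_Collect_le continuous_intros)

lemma T_borel[measurable]: "T_alpha \<alpha> \<in> sets borel"
  using T_closed by measurable

lemma seg_eq2: "seg a b = {p. snd p = 0} \<inter> {p. a < fst p} \<inter> {p. fst p < b}"
  unfolding seg_def by auto

lemma seg_borel[measurable]: "seg a b \<in> sets borel"
proof -
  have "closed {p :: real \<times> real. snd p = 0}" by (intro closed_Collect_eq continuous_intros)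
  moreover have "open {p :: real \<times> real. a < fst p}" "open {p :: real \<times> real. fst p < b}"
    by (intro open_Collect_less continuous_intros)+
  ultimately show ?thesis unfolding seg_eq2 by measurable
qed

definition mfun :: "real \<Rightarrow> (real \<times> real) set \<Rightarrow> ennreal" where
  "mfun \<alpha> A = ennreal (cos \<alpha>) * H1 (A \<inter> T_alpha \<alpha>) + H1 (A \<inter> (Gamma_alpha \<alpha> - T_alpha \<alpha>))"

lemma mu_alpha_eq: "mu_alpha \<alpha> = measure_of UNIV (sets borel) (mfun \<alpha>)"
  unfolding mu_alpha_def mfun_def[abs_def] by simp

lemma sigma_sets_borel: "sigma_sets UNIV (sets borel) = (sets borel :: (real \<times> real) set set)"
proof -
  have "sigma_sets (space borel) (sets borel) = sets (borel :: (real \<times> real) measure)"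
    by (rule sigma_algebra.sigma_sets_eq[OF sets.sigma_algebra_axioms])
  then show ?thesis by (simp only: space_borel)
qed

lemma sets_mu[measurable_cong]: "sets (mu_alpha \<alpha>) = sets borel"
  unfolding mu_alpha_eq by (simp add: sets_measure_of_conv sigma_sets_borel)

lemma space_mu: "space (mu_alpha \<alpha>) = UNIV"
  unfolding mu_alpha_eq by (simp add: space_measure_of_conv)

lemma emeasure_mu_cases:
  "emeasure (mu_alpha \<alpha>) A = (if A \<in> sets borel \<and> measure_space UNIV (sets borel) (mfun \<alpha>) then mfun \<alpha> A else 0)"
  unfolding mu_alpha_eq by (simp add: emeasure_measure_of_conv sigma_sets_borel)

lemma f_out: "\<bar>t\<bar> \<ge> 1/2 \<Longrightarrow> f_alpha \<alpha> t = 0"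
  by (simp add: f_alpha_eq)

lemma slant_image:
  fixes \<beta> c d y0 :: real
  assumes cb: "cos \<beta> > 0"
  shows "{p. c < fst p \<and> fst p < d \<and> snd p = y0 + tan \<beta> * (fst p - c)}
       = (\<lambda>p. p + (c, y0)) ` (rot \<beta> ` seg 0 ((d - c) / cos \<beta>))"
proof (intro equalityI subsetI)
  fix p :: "real \<times> real" assume "p \<in> {p. c < fst p \<and> fst p < d \<and> snd p = y0 + tan \<beta> * (fst p - c)}"
  then have p: "c < fst p" "fst p < d" "snd p = y0 + tan \<beta> * (fst p - c)" by auto
  define u where "u = (fst p - c) / cos \<beta>"
  have u: "0 < u" "u < (d - c) / cos \<beta>" using p cb by (auto simp: u_def divide_strict_right_mono)
  have "rot \<beta> (u, 0) + (c, y0) = p"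
    using cb p(3) by (cases p) (simp add: rot_def u_def tan_def field_simps)
  moreover have "(u, 0) \<in> seg 0 ((d - c) / cos \<beta>)" using u by (simp add: seg_def)
  ultimately show "p \<in> (\<lambda>p. p + (c, y0)) ` (rot \<beta> ` seg 0 ((d - c) / cos \<beta>))" by force
next
  fix p :: "real \<times> real" assume "p \<in> (\<lambda>p. p + (c, y0)) ` (rot \<beta> ` seg 0 ((d - c) / cos \<beta>))"
  then obtain u where u: "0 < u" "u < (d - c) / cos \<beta>" and p: "p = rot \<beta> (u, 0) + (c, y0)"
    by (auto simp: seg_def)
  have "u * cos \<beta> < d - c" using u cb by (simp add: field_simps)
  then show "p \<in> {p. c < fst p \<and> fst p < d \<and> snd p = y0 + tan \<beta> * (fst p - c)}"
    using u cb unfolding p by (simp add: rot_def tan_def field_simps)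
qed

context
  fixes \<alpha> :: real
  assumes a0: "0 < \<alpha>" and a1: "\<alpha> \<le> pi/4" and MS: "measure_space UNIV (sets borel) (mfun \<alpha>)"
begin

lemma cos_pos: "cos \<alpha> > 0"
  using a0 a1 by (intro cos_gt_zero) (auto simp: pi_gt_zero)

lemma emeasure_mu: "A \<in> sets borel \<Longrightarrow> emeasure (mu_alpha \<alpha>) A = mfun \<alpha> A"
  using emeasure_mu_cases[of \<alpha> A] MS by simp

lemma mu_flat: "A \<in> sets borel \<Longrightarrow> A \<subseteq> Gamma_alpha \<alpha> - T_alpha \<alpha> \<Longrightarrow> emeasure (mu_alpha \<alpha>) A = H1 A"
proof -
  assume "A \<in> sets borel" "A \<subseteq> Gamma_alpha \<alpha> - T_alpha \<alpha>"
  then have "A \<inter> T_alpha \<alpha> = {}" "A \<inter> (Gamma_alpha \<alpha> - T_alpha \<alpha>) = A" by auto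
  then show ?thesis using \<open>A \<in> sets borel\<close> by (simp add: emeasure_mu mfun_def H1_empty)
qed

lemma seg_flat: "c \<le> -1/2 \<Longrightarrow> seg a c \<subseteq> Gamma_alpha \<alpha> - T_alpha \<alpha>"
  by (auto simp: seg_def Gamma_eq T_eq f_out)

lemma G_add:
  assumes "a < b" "b < c" "c \<le> -1/2"
  shows "H1 (seg a c) = H1 (seg a b) + H1 (seg b c)"
proof -
  have [measurable]: "{(b,0::real)} \<in> sets borel" by (rule borel_closed) (rule closed_singleton)
  have eq: "seg a c = seg a b \<union> ({(b, 0)} \<union> seg b c)" using assms by (auto simp: seg_def)
  have fl: "{(b,0)} \<subseteq> Gamma_alpha \<alpha> - T_alpha \<alpha>" using assms by (auto simp: Gamma_eq T_eq f_out)
  have s1: "seg a b \<in> sets (mu_alpha \<alpha>)" "seg b c \<in> sets (mu_alpha \<alpha>)" "{(b,0::real)} \<in> sets (mu_alpha \<alpha>)"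
    by (simp_all add: sets_mu)
  have s2: "{(b,0::real)} \<union> seg b c \<in> sets (mu_alpha \<alpha>)" by (rule sets.Un[OF s1(3) s1(2)])
  have d1: "seg a b \<inter> ({(b, 0)} \<union> seg b c) = {}" "{(b,0)} \<inter> seg b c = {}" by (auto simp: seg_def)
  have "emeasure (mu_alpha \<alpha>) (seg a c) = emeasure (mu_alpha \<alpha>) (seg a b) + emeasure (mu_alpha \<alpha>) ({(b, 0)} \<union> seg b c)"
    unfolding eq by (rule plus_emeasure[symmetric, OF s1(1) s2 d1(1)])
  also have "emeasure (mu_alpha \<alpha>) ({(b, 0)} \<union> seg b c) = emeasure (mu_alpha \<alpha>) {(b, 0)} + emeasure (mu_alpha \<alpha>) (seg b c)"
    by (rule plus_emeasure[symmetric, OF s1(3) s1(2) d1(2)])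
  finally have X: "emeasure (mu_alpha \<alpha>) (seg a c) = emeasure (mu_alpha \<alpha>) (seg a b) + (emeasure (mu_alpha \<alpha>) {(b, 0)} + emeasure (mu_alpha \<alpha>) (seg b c))" .
  have m1: "emeasure (mu_alpha \<alpha>) (seg a c) = H1 (seg a c)" by (rule mu_flat[OF seg_borel seg_flat]) (use assms in simp)
  have m2: "emeasure (mu_alpha \<alpha>) (seg a b) = H1 (seg a b)" by (rule mu_flat[OF seg_borel seg_flat]) (use assms in simp)
  have m3: "emeasure (mu_alpha \<alpha>) (seg b c) = H1 (seg b c)" by (rule mu_flat[OF seg_borel seg_flat]) (use assms in simp)
  have m4: "emeasure (mu_alpha \<alpha>) {(b, 0)} = 0" using mu_flat[OF s1(3)[unfolded sets_mu] fl] by (simp add: H1_singleton)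
  show ?thesis using X m1 m2 m3 m4 by simp
qed

lemma g_add:
  assumes "x > 0" "y > 0"
  shows "H1 (seg 0 (x + y)) = H1 (seg 0 x) + H1 (seg 0 y)"
proof -
  have "H1 (seg 0 (x + y)) = H1 (seg (-1-x-y) (-1))" using H1_seg_shift[of "-1-x-y" "-1"] by simp
  also have "\<dots> = H1 (seg (-1-x-y) (-1-y)) + H1 (seg (-1-y) (-1))"
    using assms by (intro G_add) auto
  also have "\<dots> = H1 (seg 0 x) + H1 (seg 0 y)"
    using H1_seg_shift[of "-1-x-y" "-1-y"] H1_seg_shift[of "-1-y" "-1"] by simp
  finally show ?thesis .
qed

definition k where "k = enn2real (H1 (seg 0 1))"

lemma seg_nt: "L > 0 \<Longrightarrow> H1 (seg 0 L) < top"
  using H1_seg_le[of 0 L] by (simp add: le_less_trans)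

lemma seg_fin: "L > 0 \<Longrightarrow> H1 (seg 0 L) = ennreal (enn2real (H1 (seg 0 L)))"
  using seg_nt[of L] by simp

lemma k_bounds: "0 \<le> k" "k \<le> 1"
proof -
  show "0 \<le> k" by (simp add: k_def)
  have "H1 (seg 0 1) \<le> ennreal 1" using H1_seg_le[of 0 1] by simp
  then have "enn2real (H1 (seg 0 1)) \<le> enn2real (ennreal 1)" by (rule enn2real_mono) simp
  then show "k \<le> 1" unfolding k_def by simp
qed

lemma H1_seg0: "L > 0 \<Longrightarrow> H1 (seg 0 L) = ennreal (k * L)"
proof -
  define g where "g L = enn2real (H1 (seg 0 L))" for L
  have "g L = g 1 * L" if "L > 0" for L
  proof (rule additive_linear[OF _ _ that])
    show "g x \<ge> 0" for x by (simp add: g_def)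
    fix x y :: real assume xy: "x > 0" "y > 0"
    show "g (x + y) = g x + g y"
      unfolding g_def using g_add[OF xy] by (simp add: enn2real_plus seg_nt xy)
  qed
  moreover assume L: "L > 0"
  ultimately have "g L = k * L" unfolding k_def g_def by blast
  then have e: "enn2real (H1 (seg 0 L)) = k * L" unfolding g_def .
  have "H1 (seg 0 L) = ennreal (enn2real (H1 (seg 0 L)))" by (rule seg_fin[OF L])
  also have "\<dots> = ennreal (k * L)" by (simp only: e)
  finally show ?thesis .
qed

lemma H1_seg: "a < b \<Longrightarrow> H1 (seg a b) = ennreal (k * (b - a))"
  using H1_seg_shift[of a b] H1_seg0[of "b - a"] by simp

end

context
  fixes \<alpha> :: real
  assumes a0: "0 < \<alpha>" and a1: "\<alpha> \<le> pi/4" and MS: "measure_space UNIV (sets borel) (mfun \<alpha>)"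
begin

abbreviation "\<mu> \<equiv> mu_alpha \<alpha>"
abbreviation "kk \<equiv> k"
definition "\<nu> = distr \<mu> lborel fst"
definition "lam = density lborel (\<lambda>_. ennreal kk)"

lemma fst_meas[measurable]: "fst \<in> \<mu> \<rightarrow>\<^sub>M lborel"
proof -
  have "fst \<in> (borel :: (real \<times> real) measure) \<rightarrow>\<^sub>M (borel :: real measure)"
    by (rule borel_measurable_continuous_onI) (intro continuous_intros)
  then show ?thesis using measurable_cong_sets[OF sets_mu[of \<alpha>] sets_lborel] by simp
qed

lemma lam_eq: "lam = density lborel (\<lambda>_. ennreal kk)" by (simp add: lam_def)
lemma nu_eq_def: "\<nu> = distr \<mu> lborel fst" by (simp add: \<nu>_def)

lemma sets_nu[measurable_cong]: "sets \<nu> = sets borel" by (simp add: \<nu>_def)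
lemma sets_lam[measurable_cong]: "sets lam = sets borel" by (simp add: lam_def)

lemma emeasure_nu: "A \<in> sets borel \<Longrightarrow> emeasure \<nu> A = mfun \<alpha> (fst -` A)"
proof -
  assume A: "A \<in> sets borel"
  have "fst -` A \<in> sets (borel :: (real \<times> real) measure)"
    using measurable_sets[OF fst_meas, of A] A by (simp add: sets_mu space_mu)
  moreover have "emeasure \<nu> A = emeasure \<mu> (fst -` A \<inter> space \<mu>)"
    unfolding \<nu>_def by (rule emeasure_distr[OF fst_meas]) (use A in simp)
  ultimately show ?thesis by (simp add: space_mu emeasure_mu[OF a0 a1 MS])
qed

lemma emeasure_lam_box: "c \<le> d \<Longrightarrow> emeasure lam {c<..<d} = ennreal (kk * (d - c))"
  using k_bounds[OF a0 a1 MS] by (simp add: lam_def emeasure_density_const ennreal_mult)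

lemma nu_P1:
  assumes "c < d" "d \<le> -1/2"
  shows "emeasure \<nu> {c<..<d} = ennreal (kk * (d - c))"
proof -
  have "fst -` {c<..<d} \<inter> T_alpha \<alpha> = {}" using assms by (auto simp: T_eq)
  moreover have "fst -` {c<..<d} \<inter> (Gamma_alpha \<alpha> - T_alpha \<alpha>) = seg c d"
    using assms by (auto simp: seg_def Gamma_eq T_eq f_out)
  ultimately show ?thesis using assms
    by (simp add: emeasure_nu mfun_def H1_empty H1_seg[OF a0 a1 MS])
qed

lemma nu_P4:
  assumes "c < d" "1/2 \<le> c"
  shows "emeasure \<nu> {c<..<d} = ennreal (kk * (d - c))"
proof -
  have "fst -` {c<..<d} \<inter> T_alpha \<alpha> = {}" using assms by (auto simp: T_eq)
  moreover have "fst -` {c<..<d} \<inter> (Gamma_alpha \<alpha> - T_alpha \<alpha>) = seg c d"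
    using assms by (auto simp: seg_def Gamma_eq T_eq f_out)
  ultimately show ?thesis using assms
    by (simp add: emeasure_nu mfun_def H1_empty H1_seg[OF a0 a1 MS])
qed

lemma H1_slant:
  assumes "c < d" "cos \<beta> = cos \<alpha>"
  shows "H1 {p. c < fst p \<and> fst p < d \<and> snd p = y0 + tan \<beta> * (fst p - c)} = ennreal (kk * ((d - c) / cos \<alpha>))"
proof -
  have cb: "cos \<beta> > 0" using assms cos_pos[OF a0 a1 MS] by simp
  have "H1 {p. c < fst p \<and> fst p < d \<and> snd p = y0 + tan \<beta> * (fst p - c)} = H1 (seg 0 ((d - c) / cos \<beta>))"
    unfolding slant_image[OF cb] H1_translate H1_rot ..
  also have "\<dots> = ennreal (kk * ((d - c) / cos \<alpha>))"
    using assms cb by (simp add: H1_seg0[OF a0 a1 MS])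
  finally show ?thesis .
qed

lemma cos_mult_slant: "c < d \<Longrightarrow> ennreal (cos \<alpha>) * ennreal (kk * (d - c) / cos \<alpha>) = ennreal (kk * (d - c))"
  using cos_pos[OF a0 a1 MS] k_bounds[OF a0 a1 MS]
  by (simp add: ennreal_mult''[symmetric])

lemma nu_P2:
  assumes "c < d" "-1/2 \<le> c" "d \<le> 0"
  shows "emeasure \<nu> {c<..<d} = ennreal (kk * (d - c))"
proof -
  have "fst -` {c<..<d} \<inter> T_alpha \<alpha> = {p. c < fst p \<and> fst p < d \<and> snd p = tan \<alpha> * (c + 1/2) + tan \<alpha> * (fst p - c)}"
    using assms by (auto simp: T_eq f_alpha_eq algebra_simps)
  moreover have "fst -` {c<..<d} \<inter> (Gamma_alpha \<alpha> - T_alpha \<alpha>) = {}"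
    using assms by (auto simp: Gamma_eq T_eq)
  ultimately show ?thesis using assms
    by (simp add: emeasure_nu mfun_def H1_empty H1_slant cos_mult_slant)
qed

lemma nu_P3:
  assumes "c < d" "0 \<le> c" "d \<le> 1/2"
  shows "emeasure \<nu> {c<..<d} = ennreal (kk * (d - c))"
proof -
  have "fst -` {c<..<d} \<inter> T_alpha \<alpha> = {p. c < fst p \<and> fst p < d \<and> snd p = tan \<alpha> * (1/2 - c) + tan (-\<alpha>) * (fst p - c)}"
    using assms by (auto simp: T_eq f_alpha_eq algebra_simps)
  moreover have "fst -` {c<..<d} \<inter> (Gamma_alpha \<alpha> - T_alpha \<alpha>) = {}"
    using assms by (auto simp: Gamma_eq T_eq)
  ultimately show ?thesis using assms
    by (simp add: emeasure_nu mfun_def H1_empty H1_slant[where \<beta>="-\<alpha>"] cos_mult_slant del: tan_minus)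
qed

lemma nu_point: "emeasure \<nu> {c} = 0"
proof -
  have "fst -` {c} \<inter> T_alpha \<alpha> \<subseteq> {(c, f_alpha \<alpha> c)}" "fst -` {c} \<inter> (Gamma_alpha \<alpha> - T_alpha \<alpha>) \<subseteq> {(c, f_alpha \<alpha> c)}"
    by (auto simp: Gamma_eq T_eq)
  then show ?thesis by (simp add: emeasure_nu mfun_def H1_subset_singleton)
qed

end

context
  fixes \<alpha> :: real
  assumes a0: "0 < \<alpha>" and a1: "\<alpha> \<le> pi/4" and MS: "measure_space UNIV (sets borel) (mfun \<alpha>)"
begin

abbreviation "NU \<equiv> \<nu> \<alpha>"

lemma ag_Un:
  assumes "emeasure NU A = emeasure lam A" "emeasure NU B = emeasure lam B"
    "A \<in> sets borel" "B \<in> sets borel" "A \<inter> B = {}"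
  shows "emeasure NU (A \<union> B) = emeasure lam (A \<union> B)"
proof -
  have "emeasure NU (A \<union> B) = emeasure NU A + emeasure NU B"
    by (rule plus_emeasure[symmetric]) (use assms in \<open>simp_all add: sets_nu[OF a0 a1 MS]\<close>)
  moreover have "emeasure lam (A \<union> B) = emeasure lam A + emeasure lam B"
    by (rule plus_emeasure[symmetric]) (use assms in \<open>simp_all add: sets_lam[OF a0 a1 MS]\<close>)
  ultimately show ?thesis using assms by simp
qed

lemma ag_piece:
  assumes "d \<le> -1/2 \<or> (-1/2 \<le> c \<and> d \<le> 0) \<or> (0 \<le> c \<and> d \<le> 1/2) \<or> 1/2 \<le> c"
  shows "emeasure NU {c<..<d} = emeasure lam {c<..<d}"
proof (cases "c < d")
  case True
  then have "emeasure NU {c<..<d} = ennreal (k * (d - c))"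
    using assms nu_P1[OF a0 a1 MS] nu_P2[OF a0 a1 MS] nu_P3[OF a0 a1 MS] nu_P4[OF a0 a1 MS] by blast
  then show ?thesis using emeasure_lam_box[OF a0 a1 MS, of c d] True by simp
qed simp

lemma ag_pt:
  assumes "Y \<subseteq> {c}" "Y \<in> sets borel"
  shows "emeasure NU Y = emeasure lam Y"
proof -
  have "emeasure NU Y \<le> emeasure NU {c}" by (rule emeasure_mono) (use assms in \<open>auto simp: sets_nu[OF a0 a1 MS]\<close>)
  then have 1: "emeasure NU Y = 0" using nu_point[OF a0 a1 MS, of c] by simp
  have "emeasure lam Y \<le> emeasure lam {c}" by (rule emeasure_mono) (use assms in \<open>auto simp: sets_lam[OF a0 a1 MS]\<close>)
  moreover have "emeasure lam {c} = 0" unfolding lam_eq[OF a0 a1 MS] by (subst emeasure_density_const) auto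
  ultimately have 2: "emeasure lam Y = 0" by simp
  show ?thesis using 1 2 by simp
qed

lemma ag_box: "emeasure NU {a<..<b} = emeasure lam {a<..<b}"
proof -
  define X1 where "X1 = {a<..<min b (-1/2::real)}"
  define Y1 where "Y1 = {a<..<b} \<inter> {-1/2::real}"
  define X2 where "X2 = {max a (-1/2)<..<min b (0::real)}"
  define Y2 where "Y2 = {a<..<b} \<inter> {0::real}"
  define X3 where "X3 = {max a 0<..<min b (1/2::real)}"
  define Y3 where "Y3 = {a<..<b} \<inter> {1/2::real}"
  define X4 where "X4 = {max a (1/2)<..<b::real}"
  have eq: "{a<..<b} = X1 \<union> (Y1 \<union> (X2 \<union> (Y2 \<union> (X3 \<union> (Y3 \<union> X4)))))"
    unfolding X1_def Y1_def X2_def Y2_def X3_def Y3_def X4_def by auto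
  have ms: "X1 \<in> sets borel" "Y1 \<in> sets borel" "X2 \<in> sets borel" "Y2 \<in> sets borel"
    "X3 \<in> sets borel" "Y3 \<in> sets borel" "X4 \<in> sets borel"
    unfolding X1_def Y1_def X2_def Y2_def X3_def Y3_def X4_def by measurable
  have x1: "emeasure NU X1 = emeasure lam X1" unfolding X1_def by (rule ag_piece) (auto simp: min_def max_def)
  have x2: "emeasure NU X2 = emeasure lam X2" unfolding X2_def by (rule ag_piece) (auto simp: min_def max_def)
  have x3: "emeasure NU X3 = emeasure lam X3" unfolding X3_def by (rule ag_piece) (auto simp: min_def max_def)
  have x4: "emeasure NU X4 = emeasure lam X4" unfolding X4_def by (rule ag_piece) (auto simp: min_def max_def)
  have y1: "emeasure NU Y1 = emeasure lam Y1" by (rule ag_pt) (auto simp: Y1_def)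
  have y2: "emeasure NU Y2 = emeasure lam Y2" by (rule ag_pt) (auto simp: Y2_def)
  have y3: "emeasure NU Y3 = emeasure lam Y3" by (rule ag_pt) (auto simp: Y3_def)
  have d: "Y3 \<inter> X4 = {}" "X3 \<inter> (Y3 \<union> X4) = {}" "Y2 \<inter> (X3 \<union> (Y3 \<union> X4)) = {}"
     "X2 \<inter> (Y2 \<union> (X3 \<union> (Y3 \<union> X4))) = {}" "Y1 \<inter> (X2 \<union> (Y2 \<union> (X3 \<union> (Y3 \<union> X4)))) = {}"
     "X1 \<inter> (Y1 \<union> (X2 \<union> (Y2 \<union> (X3 \<union> (Y3 \<union> X4))))) = {}"
    unfolding X1_def Y1_def X2_def Y2_def X3_def Y3_def X4_def by auto
  have u6: "emeasure NU (Y3 \<union> X4) = emeasure lam (Y3 \<union> X4)" by (rule ag_Un[OF y3 x4 ms(6) ms(7) d(1)])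
  have u5: "emeasure NU (X3 \<union> (Y3 \<union> X4)) = emeasure lam (X3 \<union> (Y3 \<union> X4))"
    by (rule ag_Un[OF x3 u6 ms(5) _ d(2)]) (use ms in simp)
  have u4: "emeasure NU (Y2 \<union> (X3 \<union> (Y3 \<union> X4))) = emeasure lam (Y2 \<union> (X3 \<union> (Y3 \<union> X4)))"
    by (rule ag_Un[OF y2 u5 ms(4) _ d(3)]) (use ms in simp)
  have u3: "emeasure NU (X2 \<union> (Y2 \<union> (X3 \<union> (Y3 \<union> X4)))) = emeasure lam (X2 \<union> (Y2 \<union> (X3 \<union> (Y3 \<union> X4))))"
    by (rule ag_Un[OF x2 u4 ms(3) _ d(4)]) (use ms in simp)
  have u2: "emeasure NU (Y1 \<union> (X2 \<union> (Y2 \<union> (X3 \<union> (Y3 \<union> X4))))) = emeasure lam (Y1 \<union> (X2 \<union> (Y2 \<union> (X3 \<union> (Y3 \<union> X4)))))"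
    by (rule ag_Un[OF y1 u3 ms(2) _ d(5)]) (use ms in simp)
  show ?thesis unfolding eq
    by (rule ag_Un[OF x1 u2 ms(1) _ d(6)]) (use ms in simp)
qed

lemma nu_eq: "NU = lam"
proof (rule measure_eqI_generator_eq[symmetric, where E="range (\<lambda>(a, b). box a b)" and \<Omega>=UNIV
      and A="\<lambda>n. box (- real n) (real n)"])
  show "Int_stable (range (\<lambda>(a, b). box a b :: real set))"
    by (auto simp: Int_stable_def box_Int_box)
  show "range (\<lambda>(a, b). box a b :: real set) \<subseteq> Pow UNIV" by simp
  show "sets lam = sigma_sets UNIV (range (\<lambda>(a, b). box a b))"
    by (simp add: sets_lam[OF a0 a1 MS] borel_eq_box)
  show "sets NU = sigma_sets UNIV (range (\<lambda>(a, b). box a b))"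
    by (simp add: sets_nu[OF a0 a1 MS] borel_eq_box)
  show "range (\<lambda>n. box (- real n) (real n)) \<subseteq> range (\<lambda>(a, b). box a b :: real set)" by auto
  show "(\<Union>n. box (- real n) (real n :: real)) = UNIV"
  proof (intro equalityI subsetI)
    fix x :: real
    obtain n :: nat where "\<bar>x\<bar> < n" using reals_Archimedean2 by blast
    then have "x \<in> box (- real n) (real n)" by (auto simp: box_real abs_less_iff)
    then show "x \<in> (\<Union>n. box (- real n) (real n))" by blast
  qed simp
  show "emeasure lam (box (- real n) (real n)) \<noteq> \<infinity>" for n
    using emeasure_lam_box[OF a0 a1 MS, of "- real n" "real n"] by simp
  show "emeasure lam X = emeasure NU X" if "X \<in> range (\<lambda>(a, b). box a b)" for X
    using that ag_box by (auto simp: box_real)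
qed

end

lemma trig_facts:
  assumes a0: "0 < \<alpha>" and a1: "\<alpha> \<le> pi/4"
  shows "0 < cos \<alpha>" "cos \<alpha> \<le> 1" "0 \<le> tan \<alpha>" "1 - cos \<alpha> \<le> (sin \<alpha>)\<^sup>2"
    "(tan \<alpha>)\<^sup>2 \<le> 2 * (sin \<alpha>)\<^sup>2" "(cos \<alpha>)\<^sup>2 * (1 + (tan \<alpha>)\<^sup>2) = 1" "tan \<alpha> \<le> 1"
proof -
  show c0: "0 < cos \<alpha>" using a0 a1 by (intro cos_gt_zero) (auto simp: pi_gt_zero)
  show c1: "cos \<alpha> \<le> 1" by simp
  show t0: "0 \<le> tan \<alpha>" using a0 a1 by (intro tan_pos_pi2_le) auto
  have sc: "(sin \<alpha>)\<^sup>2 = 1 - (cos \<alpha>)\<^sup>2" by (simp add: sin_squared_eq)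
  have "(1 - cos \<alpha>) * 1 \<le> (1 - cos \<alpha>) * (1 + cos \<alpha>)" using c0 c1 by (intro mult_left_mono) auto
  then show "1 - cos \<alpha> \<le> (sin \<alpha>)\<^sup>2" unfolding sc by (simp add: power2_eq_square algebra_simps)
  have "cos (pi/4) \<le> cos \<alpha>" using a0 a1 by (intro cos_monotone_0_pi_le) auto
  then have "sqrt 2 / 2 \<le> cos \<alpha>" by (simp add: cos_45)
  then have "(sqrt 2 / 2)\<^sup>2 \<le> (cos \<alpha>)\<^sup>2" by (intro power_mono) auto
  then have cc: "1/2 \<le> (cos \<alpha>)\<^sup>2" by (simp add: power_divide)
  have tt: "(tan \<alpha>)\<^sup>2 = (sin \<alpha>)\<^sup>2 / (cos \<alpha>)\<^sup>2" by (simp add: tan_def power_divide)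
  show "(tan \<alpha>)\<^sup>2 \<le> 2 * (sin \<alpha>)\<^sup>2"
    unfolding tt using cc c0 by (simp add: divide_le_eq) (metis mult.commute mult_left_mono zero_le_power2 mult.left_commute
        mult_2 field_sum_of_halves le_divide_eq_numeral1(1) mult_le_cancel_left1 not_less)
  show "(cos \<alpha>)\<^sup>2 * (1 + (tan \<alpha>)\<^sup>2) = 1"
    unfolding tt using c0 by (simp add: field_simps sin_squared_eq)
  have "(tan \<alpha>)\<^sup>2 \<le> 1" unfolding tt using cc c0 sc by (simp add: divide_le_eq)
  then show "tan \<alpha> \<le> 1" using t0 by (simp add: power_le_one_iff abs_square_le_1)
qed

definition Sset :: "real \<Rightarrow> real \<times> real \<Rightarrow> real \<Rightarrow> real set" where
  "Sset \<alpha> x \<rho> = {t. dist (t, f_alpha \<alpha> t) x < \<rho>}"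

lemma Sset_open: "open (Sset \<alpha> x \<rho>)"
  unfolding Sset_def
  by (rule open_Collect_less) (intro continuous_intros continuous_on_compose2[OF cont_f] | simp)+

lemma Sset_borel[measurable]: "Sset \<alpha> x \<rho> \<in> sets borel"
  using Sset_open by measurable

lemma dist_graph: "dist (t, f_alpha \<alpha> t) (s, f_alpha \<alpha> s) = sqrt ((t - s)\<^sup>2 + (f_alpha \<alpha> t - f_alpha \<alpha> s)\<^sup>2)"
  by (simp add: dist_Pair_Pair dist_real_def)

lemma f_lip:
  assumes "0 \<le> tan \<alpha>"
  shows "\<bar>f_alpha \<alpha> t - f_alpha \<alpha> s\<bar> \<le> tan \<alpha> * \<bar>t - s\<bar>"
proof -
  have "\<bar>max 0 (1/2 - \<bar>t\<bar>) - max 0 (1/2 - \<bar>s\<bar>)\<bar> \<le> \<bar>t - s\<bar>" by (simp add: max_def abs_if) 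
  then have "tan \<alpha> * \<bar>max 0 (1/2 - \<bar>t\<bar>) - max 0 (1/2 - \<bar>s\<bar>)\<bar> \<le> tan \<alpha> * \<bar>t - s\<bar>"
    using assms by (rule mult_left_mono)
  then show ?thesis using assms by (simp add: f_alpha_eq abs_mult right_diff_distrib[symmetric])
qed

lemma f_bnd:
  assumes "0 \<le> tan \<alpha>"
  shows "0 \<le> f_alpha \<alpha> t" "f_alpha \<alpha> t \<le> tan \<alpha> / 2"
proof -
  show "0 \<le> f_alpha \<alpha> t" using assms by (simp add: f_alpha_eq)
  have "max 0 (1/2 - \<bar>t\<bar>) \<le> 1/2" by (simp add: max_def)
  then have "tan \<alpha> * max 0 (1/2 - \<bar>t\<bar>) \<le> tan \<alpha> * (1/2)" using assms by (rule mult_left_mono)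
  then show "f_alpha \<alpha> t \<le> tan \<alpha> / 2" by (simp add: f_alpha_eq)
qed

lemma f_diff_sq:
  assumes "0 \<le> tan \<alpha>"
  shows "(f_alpha \<alpha> t - f_alpha \<alpha> s)\<^sup>2 \<le> (tan \<alpha> / 2)\<^sup>2"
proof -
  have "f_alpha \<alpha> t - f_alpha \<alpha> s \<le> tan \<alpha> / 2" "f_alpha \<alpha> s - f_alpha \<alpha> t \<le> tan \<alpha> / 2"
    using f_bnd[OF assms, of t] f_bnd[OF assms, of s] by linarith+
  then have "\<bar>f_alpha \<alpha> t - f_alpha \<alpha> s\<bar> \<le> tan \<alpha> / 2" unfolding abs_le_iff by linarith
  then show ?thesis by (metis abs_ge_zero power2_abs power_mono)
qed

lemma S_upper: "Sset \<alpha> (s, f_alpha \<alpha> s) \<rho> \<subseteq> {s - \<rho><..<s + \<rho>}"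
proof
  fix t assume "t \<in> Sset \<alpha> (s, f_alpha \<alpha> s) \<rho>"
  then have "sqrt ((t - s)\<^sup>2 + (f_alpha \<alpha> t - f_alpha \<alpha> s)\<^sup>2) < \<rho>" by (simp add: Sset_def dist_graph)
  moreover have "\<bar>t - s\<bar> \<le> sqrt ((t - s)\<^sup>2 + (f_alpha \<alpha> t - f_alpha \<alpha> s)\<^sup>2)"
    using real_sqrt_sum_squares_ge1[of "\<bar>t - s\<bar>"] by simp
  ultimately have "\<bar>t - s\<bar> < \<rho>" by linarith
  then show "t \<in> {s - \<rho><..<s + \<rho>}" by (simp add: abs_less_iff)
qed

lemma in_S_if:
  assumes "(t - s)\<^sup>2 + (f_alpha \<alpha> t - f_alpha \<alpha> s)\<^sup>2 < \<rho>\<^sup>2" "\<rho> > 0"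
  shows "t \<in> Sset \<alpha> (s, f_alpha \<alpha> s) \<rho>"
proof -
  have "sqrt ((t - s)\<^sup>2 + (f_alpha \<alpha> t - f_alpha \<alpha> s)\<^sup>2) < sqrt (\<rho>\<^sup>2)"
    using assms(1) by (rule real_sqrt_less_mono)
  then show ?thesis using assms(2) by (simp add: Sset_def dist_graph)
qed

lemma S_lower1:
  assumes a0: "0 < \<alpha>" and a1: "\<alpha> \<le> pi/4" and r: "\<rho> > 0"
  shows "{s - \<rho> * cos \<alpha><..<s + \<rho> * cos \<alpha>} \<subseteq> Sset \<alpha> (s, f_alpha \<alpha> s) \<rho>"
proof
  note tf = trig_facts[OF a0 a1]
  fix t assume "t \<in> {s - \<rho> * cos \<alpha><..<s + \<rho> * cos \<alpha>}"
  then have "\<bar>t - s\<bar> < \<rho> * cos \<alpha>" by (simp add: abs_less_iff)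
  then have "\<bar>t - s\<bar>\<^sup>2 < (\<rho> * cos \<alpha>)\<^sup>2" by (intro power_strict_mono) auto
  then have lt: "(t - s)\<^sup>2 < (\<rho> * cos \<alpha>)\<^sup>2" by simp
  have "(f_alpha \<alpha> t - f_alpha \<alpha> s)\<^sup>2 \<le> (tan \<alpha> * \<bar>t - s\<bar>)\<^sup>2"
    using f_lip[OF tf(3), of t s] by (metis abs_ge_zero power2_abs power_mono)
  then have "(t - s)\<^sup>2 + (f_alpha \<alpha> t - f_alpha \<alpha> s)\<^sup>2 \<le> (t - s)\<^sup>2 * (1 + (tan \<alpha>)\<^sup>2)"
    by (simp add: power_mult_distrib algebra_simps)
  also have "\<dots> < (\<rho> * cos \<alpha>)\<^sup>2 * (1 + (tan \<alpha>)\<^sup>2)"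
    using lt by (intro mult_strict_right_mono) (auto simp: add_pos_nonneg)
  also have "\<dots> = \<rho>\<^sup>2" using tf(6) by (simp add: power_mult_distrib mult.assoc)
  finally show "t \<in> Sset \<alpha> (s, f_alpha \<alpha> s) \<rho>" using in_S_if r by blast
qed

lemma S_lower2:
  assumes a0: "0 < \<alpha>" and a1: "\<alpha> \<le> pi/4" and r: "\<rho> > 0" and h: "(tan \<alpha> / 2)\<^sup>2 \<le> \<rho>\<^sup>2"
  shows "{s - (\<rho> - (tan \<alpha> / 2)\<^sup>2 / \<rho>)<..<s + (\<rho> - (tan \<alpha> / 2)\<^sup>2 / \<rho>)} \<subseteq> Sset \<alpha> (s, f_alpha \<alpha> s) \<rho>"
proof
  note tf = trig_facts[OF a0 a1]
  define h2 where "h2 = (tan \<alpha> / 2)\<^sup>2"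
  define q where "q = \<rho> - h2 / \<rho>"
  have q0: "q \<ge> 0" using h r unfolding q_def h2_def by (simp add: field_simps power2_eq_square)
  fix t assume "t \<in> {s - (\<rho> - (tan \<alpha> / 2)\<^sup>2 / \<rho>)<..<s + (\<rho> - (tan \<alpha> / 2)\<^sup>2 / \<rho>)}"
  then have "\<bar>t - s\<bar> < q" by (simp add: abs_less_iff q_def h2_def)
  then have lt: "(t - s)\<^sup>2 < q\<^sup>2" using q0 by (metis abs_ge_zero power2_abs power_strict_mono zero_less_numeral)
  have "q\<^sup>2 + h2 \<le> \<rho>\<^sup>2"
  proof -
    have "q\<^sup>2 + h2 = \<rho>\<^sup>2 - h2 + h2 * (h2 / \<rho>\<^sup>2)" using r unfolding q_def by (simp add: power2_eq_square field_simps)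
    moreover have "h2 / \<rho>\<^sup>2 \<le> 1" using h r unfolding h2_def by simp
    moreover have "h2 \<ge> 0" unfolding h2_def by simp
    ultimately show ?thesis by (metis add_le_cancel_left diff_add_cancel mult_left_le)
  qed
  moreover have "(f_alpha \<alpha> t - f_alpha \<alpha> s)\<^sup>2 \<le> h2" unfolding h2_def by (rule f_diff_sq[OF tf(3)])
  ultimately have "(t - s)\<^sup>2 + (f_alpha \<alpha> t - f_alpha \<alpha> s)\<^sup>2 < \<rho>\<^sup>2" using lt by linarith
  then show "t \<in> Sset \<alpha> (s, f_alpha \<alpha> s) \<rho>" using in_S_if r by blast
qed

lemma S_exact:
  assumes aff: "\<And>t. \<bar>t - s\<bar> < 2 * r \<Longrightarrow> f_alpha \<alpha> t = f_alpha \<alpha> s + \<sigma> * (t - s)"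
    and r: "0 < \<rho>" "\<rho> \<le> 2 * r"
  shows "Sset \<alpha> (s, f_alpha \<alpha> s) \<rho> = {s - \<rho> / sqrt (1 + \<sigma>\<^sup>2)<..<s + \<rho> / sqrt (1 + \<sigma>\<^sup>2)}"
proof (intro equalityI subsetI)
  define c where "c = sqrt (1 + \<sigma>\<^sup>2)"
  have c1: "c \<ge> 1" unfolding c_def by simp
  have key: "t \<in> Sset \<alpha> (s, f_alpha \<alpha> s) \<rho> \<longleftrightarrow> \<bar>t - s\<bar> * c < \<rho>" if t: "\<bar>t - s\<bar> < 2 * r" for t
  proof -
    have ft: "f_alpha \<alpha> t - f_alpha \<alpha> s = \<sigma> * (t - s)" using aff[OF t] by simp
    have "(t - s)\<^sup>2 + (f_alpha \<alpha> t - f_alpha \<alpha> s)\<^sup>2 = (\<bar>t - s\<bar> * c)\<^sup>2"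
      unfolding ft c_def by (simp add: power_mult_distrib power2_eq_square algebra_simps)
    moreover have "c \<ge> 0" using c1 by simp
    ultimately show ?thesis by (simp add: Sset_def dist_graph abs_mult)
  qed
  {
    fix t assume t: "t \<in> Sset \<alpha> (s, f_alpha \<alpha> s) \<rho>"
    then have "\<bar>t - s\<bar> < \<rho>" using S_upper[of \<alpha> s \<rho>] by (auto simp: abs_less_iff)
    then have "\<bar>t - s\<bar> < 2 * r" using r by simp
    then have "\<bar>t - s\<bar> * c < \<rho>" using key t by blast
    then have "\<bar>t - s\<bar> < \<rho> / c" using c1 by (simp add: field_simps)
    then show "t \<in> {s - \<rho> / sqrt (1 + \<sigma>\<^sup>2)<..<s + \<rho> / sqrt (1 + \<sigma>\<^sup>2)}"
      by (simp add: c_def abs_less_iff)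
  }
  {
    fix t assume "t \<in> {s - \<rho> / sqrt (1 + \<sigma>\<^sup>2)<..<s + \<rho> / sqrt (1 + \<sigma>\<^sup>2)}"
    then have "\<bar>t - s\<bar> < \<rho> / c" by (simp add: c_def abs_less_iff)
    then have a: "\<bar>t - s\<bar> * c < \<rho>" using c1 by (simp add: field_simps)
    moreover have "\<rho> / c \<le> \<rho>" using c1 r by (simp add: field_simps)
    then have "\<bar>t - s\<bar> < 2 * r" using \<open>\<bar>t - s\<bar> < \<rho> / c\<close> r by simp
    ultimately show "t \<in> Sset \<alpha> (s, f_alpha \<alpha> s) \<rho>" using key by blast
  }
qed

definition near :: "real \<Rightarrow> real \<Rightarrow> bool" where
  "near s r \<longleftrightarrow> \<bar>s + 1/2\<bar> < 2 * r \<or> \<bar>s\<bar> < 2 * r \<or> \<bar>s - 1/2\<bar> < 2 * r"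

lemma affine_exists:
  assumes "\<not> near s r"
  shows "\<exists>\<sigma>. \<forall>t. \<bar>t - s\<bar> < 2 * r \<longrightarrow> f_alpha \<alpha> t = f_alpha \<alpha> s + \<sigma> * (t - s)"
proof -
  have n: "2 * r \<le> \<bar>s + 1/2\<bar>" "2 * r \<le> \<bar>s\<bar>" "2 * r \<le> \<bar>s - 1/2\<bar>" using assms by (auto simp: near_def)
  show ?thesis
  proof (cases "r > 0")
    case False
    then show ?thesis by (intro exI[of _ 0]) auto
  next
    case True
  then have ne: "s \<noteq> -1/2" "s \<noteq> 0" "s \<noteq> 1/2" using n by auto
  then consider "s < -1/2" | "-1/2 < s \<and> s < 0" | "0 < s \<and> s < 1/2" | "1/2 < s"
    by force
  then show ?thesis
  proof cases
    case 1
    then show ?thesis using n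
      by (intro exI[of _ 0]) (auto simp: f_alpha_eq abs_if max_def)
  next
    case 2
    then show ?thesis using n
      by (intro exI[of _ "tan \<alpha>"]) (auto simp: f_alpha_eq abs_if max_def algebra_simps)
  next
    case 3
    then show ?thesis using n
      by (intro exI[of _ "- tan \<alpha>"]) (auto simp: f_alpha_eq abs_if max_def algebra_simps)
  next
    case 4
    then show ?thesis using n
      by (intro exI[of _ 0]) (auto simp: f_alpha_eq abs_if max_def)
  qed
  qed
qed

lemma Ioo_fmeas: "{a<..<b::real} \<in> fmeasurable lborel"
  using fmeasurable_box[of a b] by simp

lemma S_fmeas: "Sset \<alpha> (s, f_alpha \<alpha> s) \<rho> \<in> fmeasurable lborel"
  by (rule fmeasurableI2[OF Ioo_fmeas S_upper]) simp

lemma L_up: "\<rho> > 0 \<Longrightarrow> measure lborel (Sset \<alpha> (s, f_alpha \<alpha> s) \<rho>) \<le> 2 * \<rho>"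
  using measure_mono_fmeasurable[OF S_upper _ Ioo_fmeas, of \<alpha> s \<rho>] by simp

lemma L_low_gen: "{c<..<d} \<subseteq> Sset \<alpha> (s, f_alpha \<alpha> s) \<rho> \<Longrightarrow> c \<le> d \<Longrightarrow> d - c \<le> measure lborel (Sset \<alpha> (s, f_alpha \<alpha> s) \<rho>)"
  using measure_mono_fmeasurable[OF _ _ S_fmeas, of "{c<..<d}" \<alpha> s \<rho>] by simp

lemma L_low1:
  assumes "0 < \<alpha>" "\<alpha> \<le> pi/4" "\<rho> > 0"
  shows "2 * \<rho> * cos \<alpha> \<le> measure lborel (Sset \<alpha> (s, f_alpha \<alpha> s) \<rho>)"
  using L_low_gen[OF S_lower1[OF assms]] trig_facts[OF assms(1,2)] assms(3) by (simp add: mult.assoc)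

lemma L_low2:
  assumes "0 < \<alpha>" "\<alpha> \<le> pi/4" "\<rho> > 0" "(tan \<alpha> / 2)\<^sup>2 \<le> \<rho>\<^sup>2"
  shows "2 * (\<rho> - (tan \<alpha> / 2)\<^sup>2 / \<rho>) \<le> measure lborel (Sset \<alpha> (s, f_alpha \<alpha> s) \<rho>)"
proof -
  have "(tan \<alpha> / 2)\<^sup>2 / \<rho> \<le> \<rho>" using assms(3,4) by (simp add: divide_le_eq power2_eq_square)
  then show ?thesis using L_low_gen[OF S_lower2[OF assms]] by simp
qed

lemma L_exact:
  assumes "\<And>t. \<bar>t - s\<bar> < 2 * r \<Longrightarrow> f_alpha \<alpha> t = f_alpha \<alpha> s + \<sigma> * (t - s)" "0 < \<rho>" "\<rho> \<le> 2 * r"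
  shows "measure lborel (Sset \<alpha> (s, f_alpha \<alpha> s) \<rho>) = 2 * \<rho> / sqrt (1 + \<sigma>\<^sup>2)"
proof -
  have "\<rho> / sqrt (1 + \<sigma>\<^sup>2) \<ge> 0" using assms by simp
  moreover have "Sset \<alpha> (s, f_alpha \<alpha> s) \<rho> = {s - \<rho> / sqrt (1 + \<sigma>\<^sup>2)<..<s + \<rho> / sqrt (1 + \<sigma>\<^sup>2)}"
    by (rule S_exact[OF assms(1) assms(2) assms(3)])
  ultimately show ?thesis by simp
qed

lemma delta_real:
  fixes k a b A cs r :: real
  assumes k: "0 \<le> k" "k \<le> 1" and ab: "cs \<le> a" "a \<le> 2" "cs \<le> b" "b \<le> 2"
    and cs: "2 - cs \<le> 2 * A" and A: "A \<ge> 0"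
    and big: "r > 1 \<Longrightarrow> 2 - A / r\<^sup>2 \<le> a \<and> 2 - A / r\<^sup>2 \<le> b"
  shows "(k * (a - b))\<^sup>2 \<le> 4 * A\<^sup>2 * (if r \<le> 1 then 1 else 1 / r ^ 4)"
proof -
  have "(k * (a - b))\<^sup>2 = k\<^sup>2 * (a - b)\<^sup>2" by (simp add: power_mult_distrib)
  also have "\<dots> \<le> 1 * (a - b)\<^sup>2"
  proof (rule mult_right_mono)
    show "k\<^sup>2 \<le> 1" using k by (simp add: power_le_one)
  qed simp
  finally have 1: "(k * (a - b))\<^sup>2 \<le> (a - b)\<^sup>2" by simp
  show ?thesis
  proof (cases "r \<le> 1")
    case True
    have "\<bar>a - b\<bar> \<le> 2 * A" using ab cs unfolding abs_le_iff by linarith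
    then have "\<bar>a - b\<bar>\<^sup>2 \<le> (2 * A)\<^sup>2" by (rule power_mono) simp
    then have "(a - b)\<^sup>2 \<le> 4 * A\<^sup>2" by (simp add: power_mult_distrib)
    then show ?thesis using 1 True by simp
  next
    case False
    then have r: "r > 1" by simp
    have "\<bar>a - b\<bar> \<le> A / r\<^sup>2" using big[OF r] ab unfolding abs_le_iff by linarith
    then have "\<bar>a - b\<bar>\<^sup>2 \<le> (A / r\<^sup>2)\<^sup>2" by (rule power_mono) simp
    then have "(a - b)\<^sup>2 \<le> (A / r\<^sup>2)\<^sup>2" by simp
    also have "\<dots> = A\<^sup>2 / r ^ 4" by (simp add: power_divide power_mult[symmetric])
    also have "\<dots> \<le> 4 * A\<^sup>2 / r ^ 4" using r by (intro divide_right_mono) simp_all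
    finally show ?thesis using 1 False by simp
  qed
qed

context
  fixes \<alpha> :: real
  assumes a0: "0 < \<alpha>" and a1: "\<alpha> \<le> pi/4" and MS: "measure_space UNIV (sets borel) (mfun \<alpha>)"
begin

lemma mu_outside: "emeasure (mu_alpha \<alpha>) (UNIV - Gamma_alpha \<alpha>) = 0"
proof -
  have "(UNIV - Gamma_alpha \<alpha>) \<inter> T_alpha \<alpha> = {}" "(UNIV - Gamma_alpha \<alpha>) \<inter> (Gamma_alpha \<alpha> - T_alpha \<alpha>) = {}"
    by (auto simp: Gamma_eq T_eq)
  then show ?thesis by (simp add: emeasure_mu[OF a0 a1 MS] mfun_def H1_empty)
qed

lemma mu_restrict:
  assumes A: "A \<in> sets borel"
  shows "emeasure (mu_alpha \<alpha>) A = emeasure (mu_alpha \<alpha>) (A \<inter> Gamma_alpha \<alpha>)"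
proof -
  have s: "A \<inter> Gamma_alpha \<alpha> \<in> sets (mu_alpha \<alpha>)" "A - Gamma_alpha \<alpha> \<in> sets (mu_alpha \<alpha>)"
    using A by (simp_all add: sets_mu)
  have "emeasure (mu_alpha \<alpha>) (A - Gamma_alpha \<alpha>) \<le> emeasure (mu_alpha \<alpha>) (UNIV - Gamma_alpha \<alpha>)"
    by (rule emeasure_mono) (auto simp: sets_mu)
  then have z: "emeasure (mu_alpha \<alpha>) (A - Gamma_alpha \<alpha>) = 0" using mu_outside by simp
  have "A = (A \<inter> Gamma_alpha \<alpha>) \<union> (A - Gamma_alpha \<alpha>)" by auto
  then have "emeasure (mu_alpha \<alpha>) A = emeasure (mu_alpha \<alpha>) (A \<inter> Gamma_alpha \<alpha>) + emeasure (mu_alpha \<alpha>) (A - Gamma_alpha \<alpha>)"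
    using plus_emeasure[OF s, symmetric] by auto
  then show ?thesis using z by simp
qed

lemma in_ball_Gamma:
  assumes "p \<in> Gamma_alpha \<alpha>"
  shows "p \<in> ball x \<rho> \<longleftrightarrow> fst p \<in> Sset \<alpha> x \<rho>"
proof -
  have p: "p = (fst p, f_alpha \<alpha> (fst p))" using assms by (simp add: Gamma_eq prod_eq_iff)
  show ?thesis by (subst p) (simp add: Sset_def dist_commute)
qed

lemma ball_Gamma: "ball x \<rho> \<inter> Gamma_alpha \<alpha> = fst -` Sset \<alpha> x \<rho> \<inter> Gamma_alpha \<alpha>"
  using in_ball_Gamma by blast

lemma emeasure_ball: "emeasure (mu_alpha \<alpha>) (ball x \<rho>) = ennreal k * emeasure lborel (Sset \<alpha> x \<rho>)"
proof -
  have fb: "fst -` Sset \<alpha> x \<rho> \<in> sets (borel :: (real \<times> real) measure)"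
    using measurable_sets[OF fst_meas[OF a0 a1 MS], of "Sset \<alpha> x \<rho>"] by (simp add: sets_mu space_mu)
  have "emeasure (mu_alpha \<alpha>) (ball x \<rho>) = emeasure (mu_alpha \<alpha>) (ball x \<rho> \<inter> Gamma_alpha \<alpha>)"
    by (rule mu_restrict) simp
  also have "\<dots> = emeasure (mu_alpha \<alpha>) (fst -` Sset \<alpha> x \<rho> \<inter> Gamma_alpha \<alpha>)" by (simp only: ball_Gamma)
  also have "\<dots> = emeasure (mu_alpha \<alpha>) (fst -` Sset \<alpha> x \<rho>)" using mu_restrict[OF fb] by simp
  also have "\<dots> = emeasure (\<nu> \<alpha>) (Sset \<alpha> x \<rho>)"
    unfolding nu_eq_def[OF a0 a1 MS] by (subst emeasure_distr[OF fst_meas[OF a0 a1 MS]]) (simp_all add: space_mu)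
  also have "\<dots> = emeasure lam (Sset \<alpha> x \<rho>)" by (simp only: nu_eq[OF a0 a1 MS])
  also have "\<dots> = ennreal k * emeasure lborel (Sset \<alpha> x \<rho>)"
    unfolding lam_eq[OF a0 a1 MS] by (rule emeasure_density_const) simp
  finally show ?thesis .
qed

lemma measure_ball: "measure (mu_alpha \<alpha>) (ball x \<rho>) = k * measure lborel (Sset \<alpha> x \<rho>)"
  unfolding measure_def emeasure_ball using k_bounds[OF a0 a1 MS] by (simp add: enn2real_mult)

definition phi :: "real \<Rightarrow> real" where "phi r = (if r \<le> 1 then 1 else 1 / r ^ 4)"

lemma delta_bound:
  assumes r: "r > 0"
  shows "(Delta1 (mu_alpha \<alpha>) (s, f_alpha \<alpha> s) r)\<^sup>2 \<le> (if near s r then 4 * ((sin \<alpha>)\<^sup>2)\<^sup>2 * phi r else 0)"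
proof -
  note tf = trig_facts[OF a0 a1]
  define L where "L \<rho> = measure lborel (Sset \<alpha> (s, f_alpha \<alpha> s) \<rho>)" for \<rho>
  have D: "Delta1 (mu_alpha \<alpha>) (s, f_alpha \<alpha> s) r = k * (L r / r - L (2 * r) / (2 * r))"
    unfolding Delta1_def measure_ball L_def by (simp add: algebra_simps)
  show ?thesis
  proof (cases "near s r")
    case False
    obtain \<sigma> where aff: "\<And>t. \<bar>t - s\<bar> < 2 * r \<Longrightarrow> f_alpha \<alpha> t = f_alpha \<alpha> s + \<sigma> * (t - s)"
      using affine_exists[OF False, of \<alpha>] by blast
    have "L r = 2 * r / sqrt (1 + \<sigma>\<^sup>2)"
      unfolding L_def using r by (intro L_exact[OF aff]) auto
    moreover have "L (2 * r) = 2 * (2 * r) / sqrt (1 + \<sigma>\<^sup>2)"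
      unfolding L_def using r by (intro L_exact[OF aff]) auto
    ultimately have "Delta1 (mu_alpha \<alpha>) (s, f_alpha \<alpha> s) r = 0" using r unfolding D by simp
    then show ?thesis using False by simp
  next
    case True
    define a where "a = L r / r"
    define b where "b = L (2 * r) / (2 * r)"
    have ab: "2 * cos \<alpha> \<le> a" "a \<le> 2" "2 * cos \<alpha> \<le> b" "b \<le> 2"
      unfolding a_def b_def L_def using r L_up[of r \<alpha> s] L_up[of "2*r" \<alpha> s] L_low1[OF a0 a1, of r s] L_low1[OF a0 a1, of "2*r" s]
      by (simp_all add: field_simps)
    have big: "2 - (sin \<alpha>)\<^sup>2 / r\<^sup>2 \<le> a \<and> 2 - (sin \<alpha>)\<^sup>2 / r\<^sup>2 \<le> b" if r1: "r > 1"
    proof -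
      define h2 where "h2 = (tan \<alpha> / 2)\<^sup>2"
      have h2s: "2 * h2 \<le> (sin \<alpha>)\<^sup>2" using tf(5) unfolding h2_def by (simp add: power_divide)
      have "(tan \<alpha>)\<^sup>2 \<le> 1" using tf(3) tf(7) by (simp add: power_le_one)
      then have h2le: "h2 \<le> 1" unfolding h2_def by (simp add: power_divide)
      have h0: "h2 \<ge> 0" unfolding h2_def by simp
      have rr: "1 \<le> r\<^sup>2" "r\<^sup>2 \<le> (2 * r)\<^sup>2" using r1 by (simp_all add: power2_eq_square) (metis less_eq_real_def mult_le_cancel_left1 one_le_power r1 power2_eq_square)
      have l1: "2 * (r - h2 / r) \<le> L r" unfolding L_def h2_def
        using r h2le rr by (intro L_low2[OF a0 a1]) (auto simp: h2_def)
      have l2: "2 * (2 * r - h2 / (2 * r)) \<le> L (2 * r)" unfolding L_def h2_def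
        using r h2le rr by (intro L_low2[OF a0 a1]) (auto simp: h2_def)
      have e1: "2 * (r - h2 / r) / r = 2 - 2 * h2 / r\<^sup>2" using r by (simp add: field_simps power2_eq_square)
      have e2: "2 * (2 * r - h2 / (2 * r)) / (2 * r) = 2 - h2 / (2 * r\<^sup>2)" using r by (simp add: field_simps power2_eq_square)
      have "2 * (r - h2 / r) / r \<le> a" unfolding a_def by (rule divide_right_mono[OF l1]) (use r in simp)
      then have A1: "2 - 2 * h2 / r\<^sup>2 \<le> a" using e1 by simp
      have "2 * (2 * r - h2 / (2 * r)) / (2 * r) \<le> b" unfolding b_def by (rule divide_right_mono[OF l2]) (use r in simp)
      then have B1: "2 - h2 / (2 * r\<^sup>2) \<le> b" using e2 by simp
      have C1: "h2 / (2 * r\<^sup>2) \<le> 2 * h2 / r\<^sup>2" using h0 r by (simp add: field_simps)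
      have D1: "2 * h2 / r\<^sup>2 \<le> (sin \<alpha>)\<^sup>2 / r\<^sup>2" using h2s r by (simp add: divide_right_mono)
      show ?thesis using A1 B1 C1 D1 by linarith
    qed
    have cs: "2 - 2 * cos \<alpha> \<le> 2 * (sin \<alpha>)\<^sup>2" using tf(4) by simp
    have "(k * (a - b))\<^sup>2 \<le> 4 * ((sin \<alpha>)\<^sup>2)\<^sup>2 * (if r \<le> 1 then 1 else 1 / r ^ 4)"
      by (rule delta_real[OF k_bounds[OF a0 a1 MS] ab cs]) (use big in auto)
    then show ?thesis using True unfolding D a_def b_def phi_def by simp
  qed
qed

end

lemma int_tail: "(\<integral>\<^sup>+ r. ennreal (1 / r ^ 4) * indicator {1..} r \<partial>lborel) = ennreal (1/3)"
proof -
  have "(\<integral>\<^sup>+ r. ennreal (1 / r ^ 4) * indicator {1..} r \<partial>lborel) = ennreal (0 - (- 1 / (3 * 1 ^ 3)))"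
  proof (rule nn_integral_FTC_atLeast[where F = "\<lambda>x. - 1 / (3 * x ^ 3)"])
    show "(\<lambda>r::real. 1 / r ^ 4) \<in> borel_measurable borel" by measurable
    fix x :: real assume x: "1 \<le> x"
    show "((\<lambda>x. - 1 / (3 * x ^ 3)) has_real_derivative 1 / x ^ 4) (at x)"
      using x by (auto intro!: derivative_eq_intros simp: field_simps power_eq_if)
    show "0 \<le> 1 / x ^ 4" using x by simp
  next
    show "((\<lambda>x::real. - 1 / (3 * x ^ 3)) \<longlongrightarrow> 0) at_top" by real_asymp
  qed
  then show ?thesis by simp
qed

definition phi2 :: "real \<Rightarrow> real" where "phi2 r = (if r \<le> 1 then 1 else 1 / r ^ 4)"

lemma int_phi: "(\<integral>\<^sup>+ r. ennreal (phi2 r) * indicator {0<..} r \<partial>lborel) \<le> ennreal (4/3)"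
proof -
  have "(\<integral>\<^sup>+ r. ennreal (phi2 r) * indicator {0<..} r \<partial>lborel)
      \<le> (\<integral>\<^sup>+ r. indicator {0..1} r + ennreal (1 / r ^ 4) * indicator {1..} r \<partial>lborel)"
    by (rule nn_integral_mono) (auto simp: phi2_def indicator_def)
  also have "\<dots> = (\<integral>\<^sup>+ r. indicator {0..1::real} r \<partial>lborel) + (\<integral>\<^sup>+ r. ennreal (1 / r ^ 4) * indicator {1..} r \<partial>lborel)"
    by (intro nn_integral_add) (simp_all add: borel_measurable_indicator)
  also have "\<dots> = ennreal 1 + ennreal (1/3)" by (simp add: int_tail)
  also have "\<dots> = ennreal (1 + 1/3)" by (rule ennreal_plus[symmetric]) simp_all
  also have "\<dots> = ennreal (4/3)" by simp
  finally show ?thesis .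
qed

definition nearset :: "real \<Rightarrow> real set" where "nearset r = {s. near s r}"

lemma nearset_borel[measurable]: "nearset r \<in> sets borel"
  unfolding nearset_def near_def by measurable

lemma nearset_measure: "emeasure lborel (nearset r) \<le> ennreal (12 * r)" if "r > 0"
proof -
  have eq: "nearset r = {-1/2 - 2*r<..<-1/2 + 2*r} \<union> {-2*r<..<2*r} \<union> {1/2 - 2*r<..<1/2 + 2*r}"
    by (auto simp: nearset_def near_def abs_less_iff)
  have "emeasure lborel (nearset r) \<le> emeasure lborel ({-1/2 - 2*r<..<-1/2 + 2*r} \<union> {-2*r<..<2*r}) + emeasure lborel {1/2 - 2*r<..<1/2 + 2*r}"
    unfolding eq by (rule emeasure_subadditive) auto
  also have "\<dots> \<le> (emeasure lborel {-1/2 - 2*r<..<-1/2 + 2*r} + emeasure lborel {-2*r<..<2*r}) + emeasure lborel {1/2 - 2*r<..<1/2 + 2*r}"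
    by (intro add_mono emeasure_subadditive) auto
  also have "\<dots> = ennreal (12 * r)" using that by (simp flip: ennreal_plus)
  finally show ?thesis .
qed

context
  fixes \<alpha> :: real
  assumes a0: "0 < \<alpha>" and a1: "\<alpha> \<le> pi/4" and MS: "measure_space UNIV (sets borel) (mfun \<alpha>)"
begin

lemma phi_eq: "phi r = phi2 r"
  using phi_def[OF a0 a1 MS] phi2_def by simp

lemma main_MS:
  "(\<integral>\<^sup>+ x. (\<integral>\<^sup>+ r \<in> {0<..}. ennreal ((Delta1 (mu_alpha \<alpha>) x r)\<^sup>2 / r) \<partial>lborel) \<partial>mu_alpha \<alpha>)
     \<le> ennreal (64 * sin \<alpha> ^ 4)"
proof -
  define A where "A = ((sin \<alpha>)\<^sup>2)\<^sup>2"
  have A0: "A \<ge> 0" by (simp add: A_def)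
  define w where "w s r = (if 0 < r \<and> near s r then phi2 r / r else 0)" for s r :: real
  have w0: "w s r \<ge> 0" for s r by (simp add: w_def phi2_def)
  have wm: "(\<lambda>(s, r). ennreal (4 * A * w s r)) \<in> borel_measurable (lborel \<Otimes>\<^sub>M lborel)"
    unfolding w_def near_def phi2_def by measurable
  define G where "G s = (\<integral>\<^sup>+ r. ennreal (4 * A * w s r) \<partial>lborel)" for s
  have Gm: "G \<in> borel_measurable lborel"
    unfolding G_def by (rule lborel.borel_measurable_nn_integral) (use wm in simp)
  have Gm': "G \<in> borel_measurable borel" using Gm by (simp only: measurable_lborel2)
  have Gmd: "G \<in> borel_measurable (distr (mu_alpha \<alpha>) lborel fst)" using Gm by simp
  define F where "F x = (\<integral>\<^sup>+ r \<in> {0<..}. ennreal ((Delta1 (mu_alpha \<alpha>) x r)\<^sup>2 / r) \<partial>lborel)" for x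
  have pw: "F x \<le> G (fst x)" if x: "x \<in> Gamma_alpha \<alpha>" for x
  proof -
    define s where "s = fst x"
    have xs: "x = (s, f_alpha \<alpha> s)" using x by (simp add: s_def Gamma_eq prod_eq_iff)
    show ?thesis unfolding F_def G_def s_def[symmetric]
    proof (rule nn_integral_mono)
      fix r :: real
      show "ennreal ((Delta1 (mu_alpha \<alpha>) x r)\<^sup>2 / r) * indicator {0<..} r \<le> ennreal (4 * A * w s r)"
      proof (cases "r > 0")
        case True
        have "(Delta1 (mu_alpha \<alpha>) x r)\<^sup>2 \<le> (if near s r then 4 * A * phi2 r else 0)"
          using delta_bound[OF a0 a1 MS True, of s] unfolding xs A_def phi_eq .
        then have "(Delta1 (mu_alpha \<alpha>) x r)\<^sup>2 / r \<le> (if near s r then 4 * A * phi2 r else 0) / r"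
          using True by (intro divide_right_mono) auto
        also have "\<dots> = 4 * A * w s r" using True by (simp add: w_def)
        finally show ?thesis using True by (simp add: ennreal_leI)
      qed simp
    qed
  qed
  have null: "UNIV - Gamma_alpha \<alpha> \<in> null_sets (mu_alpha \<alpha>)"
    using mu_outside[OF a0 a1 MS] by (simp add: null_sets_def sets_mu)
  have "(\<integral>\<^sup>+ x. F x \<partial>mu_alpha \<alpha>) \<le> (\<integral>\<^sup>+ x. G (fst x) \<partial>mu_alpha \<alpha>)"
    by (rule nn_integral_mono_AE, rule AE_I'[OF null]) (use pw in auto)
  also have "(\<integral>\<^sup>+ x. G (fst x) \<partial>mu_alpha \<alpha>) = (\<integral>\<^sup>+ s. G s \<partial>(\<nu> \<alpha>))"
    unfolding nu_eq_def[OF a0 a1 MS]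
    by (rule nn_integral_distr[symmetric, OF fst_meas[OF a0 a1 MS] Gmd])
  also have "\<dots> = (\<integral>\<^sup>+ s. G s \<partial>lam)" by (simp only: nu_eq[OF a0 a1 MS])
  also have "\<dots> = (\<integral>\<^sup>+ s. ennreal k * G s \<partial>lborel)"
    unfolding lam_eq[OF a0 a1 MS] by (rule nn_integral_density) (simp_all add: Gm')
  also have "\<dots> \<le> (\<integral>\<^sup>+ s. G s \<partial>lborel)"
  proof (rule nn_integral_mono)
    fix s
    have "ennreal k * G s \<le> 1 * G s" using k_bounds[OF a0 a1 MS] by (intro mult_right_mono) simp_all
    then show "ennreal k * G s \<le> G s" by simp
  qed
  also have "(\<integral>\<^sup>+ s. G s \<partial>lborel) = (\<integral>\<^sup>+ r. (\<integral>\<^sup>+ s. ennreal (4 * A * w s r) \<partial>lborel) \<partial>lborel)"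
    unfolding G_def by (rule lborel_pair.Fubini'[symmetric]) (use wm in simp)
  also have "\<dots> \<le> (\<integral>\<^sup>+ r. ennreal (48 * A) * (ennreal (phi2 r) * indicator {0<..} r) \<partial>lborel)"
  proof (rule nn_integral_mono)
    fix r :: real
    show "(\<integral>\<^sup>+ s. ennreal (4 * A * w s r) \<partial>lborel) \<le> ennreal (48 * A) * (ennreal (phi2 r) * indicator {0<..} r)"
    proof (cases "r > 0")
      case False
      then show ?thesis by (simp add: w_def)
    next
      case True
      have p0: "phi2 r \<ge> 0" by (simp add: phi2_def)
      have "(\<integral>\<^sup>+ s. ennreal (4 * A * w s r) \<partial>lborel) = (\<integral>\<^sup>+ s. ennreal (4 * A * phi2 r / r) * indicator (nearset r) s \<partial>lborel)"
        using True by (intro nn_integral_cong) (simp add: w_def nearset_def indicator_def)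
      also have "\<dots> = ennreal (4 * A * phi2 r / r) * emeasure lborel (nearset r)"
        by (rule nn_integral_cmult_indicator) simp
      also have "\<dots> \<le> ennreal (4 * A * phi2 r / r) * ennreal (12 * r)"
        by (intro mult_left_mono nearset_measure True) simp
      also have "\<dots> = ennreal (48 * A * phi2 r)"
        using True A0 p0 by (simp add: ennreal_mult''[symmetric] field_simps)
      also have "\<dots> = ennreal (48 * A) * (ennreal (phi2 r) * indicator {0<..} r)"
        using True A0 p0 by (simp add: ennreal_mult)
      finally show ?thesis .
    qed
  qed
  also have "\<dots> = ennreal (48 * A) * (\<integral>\<^sup>+ r. ennreal (phi2 r) * indicator {0<..} r \<partial>lborel)"
    by (rule nn_integral_cmult) (unfold phi2_def, measurable)
  also have "\<dots> \<le> ennreal (48 * A) * ennreal (4/3)"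
    by (intro mult_left_mono int_phi) simp
  also have "\<dots> = ennreal (64 * sin \<alpha> ^ 4)"
    using A0 by (simp add: ennreal_mult''[symmetric] A_def power_mult[symmetric])
  finally show ?thesis unfolding F_def .
qed

end

theorem lemma4p2:
  shows "\<exists>C::real. \<forall>\<alpha>::real. 0 < \<alpha> \<and> \<alpha> \<le> pi/4 \<longrightarrow>
     (\<integral>\<^sup>+ x. (\<integral>\<^sup>+ r \<in> {0<..}. ennreal ((Delta1 (mu_alpha \<alpha>) x r)\<^sup>2 / r) \<partial>lborel) \<partial>mu_alpha \<alpha>)
       \<le> ennreal (C * sin \<alpha> ^ 4)"
proof (intro exI[of _ 64] allI impI)
  fix \<alpha> :: real
  assume a: "0 < \<alpha> \<and> \<alpha> \<le> pi/4"
  show "(\<integral>\<^sup>+ x. (\<integral>\<^sup>+ r \<in> {0<..}. ennreal ((Delta1 (mu_alpha \<alpha>) x r)\<^sup>2 / r) \<partial>lborel) \<partial>mu_alpha \<alpha>)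
       \<le> ennreal (64 * sin \<alpha> ^ 4)"
  proof (cases "measure_space UNIV (sets borel) (mfun \<alpha>)")
    case True
    then show ?thesis using main_MS a by blast
  next
    case False
    have "UNIV \<in> null_sets (mu_alpha \<alpha>)"
      using False by (simp add: null_sets_def sets_mu emeasure_mu_cases)
    then have ae: "AE x in mu_alpha \<alpha>. False" by (rule AE_I') auto
    have "(\<integral>\<^sup>+ x. (\<integral>\<^sup>+ r \<in> {0<..}. ennreal ((Delta1 (mu_alpha \<alpha>) x r)\<^sup>2 / r) \<partial>lborel) \<partial>mu_alpha \<alpha>)
        \<le> (\<integral>\<^sup>+ x. 0 \<partial>mu_alpha \<alpha>)"
      by (rule nn_integral_mono_AE) (use ae in \<open>auto elim: AE_mp\<close>)
    then show ?thesis by simp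
  qed
qed

end
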